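(* Let $(X,d)$ be a locally compact, geodesically complete CAT(0)-space connected at infinity, and let $d'$ be a metric on $X$ such that $(X,d')$ is a locally compact geodesically complete CAT(0)-space and $d(x,y)\le1\iff d'(x,y)\le1$ for all $x,y\in X$. Let $\{x_z\}_{z\in\mathbb Z}$ and $\{y_z\}_{z\in\mathbb Z}$ be $r$-sequences in $(X,d)$. Then they are parallel-equivalent with respect to $d$ if and only if they are parallel-equivalent with respect to $d'$.
   Context: With the normalization $r=1$, an $r$-sequence in a metric space $(X,D)$ is a sequence $\{x_z\}_{z\in\mathbb Z}$ with $D(x_{z_1},x_{z_2})=|z_1-z_2|$ for all $z_1,z_2\in\mathbb Z$. Two $r$-sequences are parallel-equivalent (with respect to $D$) if the Hausdorff distance (for $D$) between the sets $\{x_z\}$ and $\{y_z\}$ is finite. Geodesically complete: geodesic and every geodesic segment lies in a complete geodesic; connected at infinity: complement of every metric ball path connected. *)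

theory Defs
  imports "HOL-Analysis.Analysis"
begin

definition geodesic_seg :: "'a set \<Rightarrow> ('a \<Rightarrow> 'a \<Rightarrow> real) \<Rightarrow> (real \<Rightarrow> 'a) \<Rightarrow> real \<Rightarrow> real \<Rightarrow> bool" where
  "geodesic_seg X d g a b \<longleftrightarrow> a \<le> b \<and> g ` {a..b} \<subseteq> X \<and>
     (\<forall>s\<in>{a..b}. \<forall>t\<in>{a..b}. d (g s) (g t) = \<bar>s - t\<bar>)"

definition geodesic_from_to :: "'a set \<Rightarrow> ('a \<Rightarrow> 'a \<Rightarrow> real) \<Rightarrow> (real \<Rightarrow> 'a) \<Rightarrow> 'a \<Rightarrow> 'a \<Rightarrow> bool" where
  "geodesic_from_to X d g x y \<longleftrightarrow> geodesic_seg X d g 0 (d x y) \<and> g 0 = x \<and> g (d x y) = y"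

definition geodesic_space :: "'a set \<Rightarrow> ('a \<Rightarrow> 'a \<Rightarrow> real) \<Rightarrow> bool" where
  "geodesic_space X d \<longleftrightarrow> Metric_space X d \<and>
     (\<forall>x\<in>X. \<forall>y\<in>X. \<exists>g. geodesic_from_to X d g x y)"

definition geodesic_line :: "'a set \<Rightarrow> ('a \<Rightarrow> 'a \<Rightarrow> real) \<Rightarrow> (real \<Rightarrow> 'a) \<Rightarrow> bool" where
  "geodesic_line X d c \<longleftrightarrow> range c \<subseteq> X \<and> (\<forall>s t. d (c s) (c t) = \<bar>s - t\<bar>)"

definition geodesically_complete :: "'a set \<Rightarrow> ('a \<Rightarrow> 'a \<Rightarrow> real) \<Rightarrow> bool" where
  "geodesically_complete X d \<longleftrightarrow> geodesic_space X d \<and>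
     (\<forall>g a b. geodesic_seg X d g a b \<and> a < b \<longrightarrow>
        (\<exists>c. geodesic_line X d c \<and> g ` {a..b} \<subseteq> range c))"

text \<open>Point of the Euclidean segment from p to q (in the plane, modelled by complex)
  at distance s from p.\<close>
definition seg_pt :: "complex \<Rightarrow> complex \<Rightarrow> real \<Rightarrow> complex" where
  "seg_pt p q s = p + complex_of_real (s / cmod (q - p)) * (q - p)"

definition CAT0 :: "'a set \<Rightarrow> ('a \<Rightarrow> 'a \<Rightarrow> real) \<Rightarrow> bool" where
  "CAT0 X d \<longleftrightarrow> geodesic_space X d \<and>
     (\<forall>x y z g1 g2 g3 a b c.
        x \<in> X \<and> y \<in> X \<and> z \<in> X \<and>
        geodesic_from_to X d g1 x y \<and> geodesic_from_to X d g2 y z \<and> geodesic_from_to X d g3 z x \<and>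
        cmod (a - b) = d x y \<and> cmod (b - c) = d y z \<and> cmod (c - a) = d z x \<longrightarrow>
        (let T = {(g1 s, seg_pt a b s) | s. s \<in> {0..d x y}} \<union>
                 {(g2 s, seg_pt b c s) | s. s \<in> {0..d y z}} \<union>
                 {(g3 s, seg_pt c a s) | s. s \<in> {0..d z x}}
         in \<forall>(p, p') \<in> T. \<forall>(q, q') \<in> T. d p q \<le> cmod (p' - q')))"

definition locally_compact_metric :: "'a set \<Rightarrow> ('a \<Rightarrow> 'a \<Rightarrow> real) \<Rightarrow> bool" where
  "locally_compact_metric X d \<longleftrightarrow> locally_compact_space (Metric_space.mtopology X d)"

definition connected_at_infinity :: "'a set \<Rightarrow> ('a \<Rightarrow> 'a \<Rightarrow> real) \<Rightarrow> bool" where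
  "connected_at_infinity X d \<longleftrightarrow>
     (\<forall>x\<in>X. \<forall>r. path_connectedin (Metric_space.mtopology X d) (X - Metric_space.mcball X d x r))"

text \<open>r-sequence with r = 1.\<close>
definition r_sequence :: "'a set \<Rightarrow> ('a \<Rightarrow> 'a \<Rightarrow> real) \<Rightarrow> (int \<Rightarrow> 'a) \<Rightarrow> bool" where
  "r_sequence X d xs \<longleftrightarrow> range xs \<subseteq> X \<and>
     (\<forall>z1 z2. d (xs z1) (xs z2) = \<bar>real_of_int (z1 - z2)\<bar>)"

definition finite_hausdorff_dist :: "('a \<Rightarrow> 'a \<Rightarrow> real) \<Rightarrow> 'a set \<Rightarrow> 'a set \<Rightarrow> bool" where
  "finite_hausdorff_dist d A B \<longleftrightarrow>
     (\<exists>C. (\<forall>p\<in>A. \<exists>q\<in>B. d p q \<le> C) \<and> (\<forall>q\<in>B. \<exists>p\<in>A. d p q \<le> C))"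

definition parallel_equiv :: "('a \<Rightarrow> 'a \<Rightarrow> real) \<Rightarrow> (int \<Rightarrow> 'a) \<Rightarrow> (int \<Rightarrow> 'a) \<Rightarrow> bool" where
  "parallel_equiv d xs ys \<longleftrightarrow> finite_hausdorff_dist d (range xs) (range ys)"

end

theory Submission
  imports Defs
begin

lemma chain_bound:
  assumes gd: "geodesic_space X d" and me: "Metric_space X e"
    and eq: "\<forall>x\<in>X. \<forall>y\<in>X. d x y \<le> 1 \<longleftrightarrow> e x y \<le> 1"
  shows "\<forall>x\<in>X. \<forall>y\<in>X. d x y \<le> real (Suc n) \<longrightarrow> e x y \<le> real (Suc n)"
proof (induction n)
  case 0
  then show ?case using eq by auto
next
  case (Suc n)
  show ?case
  proof (intro ballI impI)
    fix x y assume x: "x \<in> X" and y: "y \<in> X" and dl: "d x y \<le> real (Suc (Suc n))"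
    show "e x y \<le> real (Suc (Suc n))"
    proof (cases "d x y \<le> 1")
      case True
      then show ?thesis using eq x y by auto
    next
      case False
      from gd x y obtain g where g: "geodesic_from_to X d g x y"
        unfolding geodesic_space_def by blast
      have one: "1 \<in> {0..d x y}" using False by auto
      have zero: "0 \<in> {0..d x y}" "d x y \<in> {0..d x y}" using False by auto
      have gs: "g ` {0..d x y} \<subseteq> X" and gi: "\<forall>s\<in>{0..d x y}. \<forall>t\<in>{0..d x y}. d (g s) (g t) = \<bar>s - t\<bar>"
        and g0: "g 0 = x" and gy: "g (d x y) = y"
        using g unfolding geodesic_from_to_def geodesic_seg_def by blast+
      have p: "g 1 \<in> X" using gs one by blast
      have "d (g 0) (g 1) = \<bar>0 - 1\<bar>" using gi zero(1) one by blast
      then have dxp: "d x (g 1) = 1" using g0 by simp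
      have "d (g 1) (g (d x y)) = \<bar>1 - d x y\<bar>" using gi zero(2) one by blast
      then have dpy: "d (g 1) y = d x y - 1" using gy False by simp
      have e1: "e x (g 1) \<le> 1" using eq x p dxp by (metis order_refl)
      have e2: "e (g 1) y \<le> real (Suc n)" using Suc p y dpy dl by auto
      have "e x y \<le> e x (g 1) + e (g 1) y" using Metric_space.triangle[OF me x p y] .
      then show ?thesis using e1 e2 by simp
    qed
  qed
qed

lemma plus_two_bound:
  assumes gd: "geodesic_space X d" and me: "Metric_space X e"
    and eq: "\<forall>x\<in>X. \<forall>y\<in>X. d x y \<le> 1 \<longleftrightarrow> e x y \<le> 1"
    and x: "x \<in> X" and y: "y \<in> X"
  shows "e x y \<le> d x y + 2"
proof -
  define n where "n = nat (ceiling (d x y))"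
  have nn: "0 \<le> d x y"
    using Metric_space.nonneg[OF gd[unfolded geodesic_space_def, THEN conjunct1]] by blast
  have "d x y \<le> real n" unfolding n_def by linarith
  also have "\<dots> \<le> real (Suc n)" by simp
  finally have "e x y \<le> real (Suc n)" using chain_bound[OF gd me eq] x y by blast
  moreover have "real n < d x y + 1"
    using nn unfolding n_def by linarith
  ultimately show ?thesis by simp
qed

lemma transfer_pe:
  assumes gd: "geodesic_space X d" and me: "Metric_space X e"
    and eq: "\<forall>x\<in>X. \<forall>y\<in>X. d x y \<le> 1 \<longleftrightarrow> e x y \<le> 1"
    and rx: "range xs \<subseteq> X" and ry: "range ys \<subseteq> X"
    and pe: "parallel_equiv d xs ys"
  shows "parallel_equiv e xs ys"
proof -
  from pe obtain C where C1: "\<forall>p\<in>range xs. \<exists>q\<in>range ys. d p q \<le> C"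
    and C2: "\<forall>q\<in>range ys. \<exists>p\<in>range xs. d p q \<le> C"
    unfolding parallel_equiv_def finite_hausdorff_dist_def by blast
  have "\<forall>p\<in>range xs. \<exists>q\<in>range ys. e p q \<le> C + 2"
  proof
    fix p assume p: "p \<in> range xs"
    then obtain q where q: "q \<in> range ys" "d p q \<le> C" using C1 by blast
    have "e p q \<le> d p q + 2" using plus_two_bound[OF gd me eq] p q rx ry by blast
    then have "e p q \<le> C + 2" using q(2) by linarith
    then show "\<exists>q\<in>range ys. e p q \<le> C + 2" using q(1) by blast
  qed
  moreover have "\<forall>q\<in>range ys. \<exists>p\<in>range xs. e p q \<le> C + 2"
  proof
    fix q assume q: "q \<in> range ys"
    then obtain p where p: "p \<in> range xs" "d p q \<le> C" using C2 by blast
    have "e p q \<le> d p q + 2" using plus_two_bound[OF gd me eq] p q rx ry by blast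
    then have "e p q \<le> C + 2" using p(2) by linarith
    then show "\<exists>p\<in>range xs. e p q \<le> C + 2" using p(1) by blast
  qed
  ultimately show ?thesis
    unfolding parallel_equiv_def finite_hausdorff_dist_def by blast
qed

theorem lemma4:
  fixes X :: "'a set" and d d' :: "'a \<Rightarrow> 'a \<Rightarrow> real"
    and xs ys :: "int \<Rightarrow> 'a"
  assumes "CAT0 X d" "locally_compact_metric X d" "geodesically_complete X d"
    and "connected_at_infinity X d"
    and "CAT0 X d'" "locally_compact_metric X d'" "geodesically_complete X d'"
    and "\<forall>x\<in>X. \<forall>y\<in>X. d x y \<le> 1 \<longleftrightarrow> d' x y \<le> 1"
    and "r_sequence X d xs" "r_sequence X d ys"
  shows "parallel_equiv d xs ys \<longleftrightarrow> parallel_equiv d' xs ys"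
proof -
  have g1: "geodesic_space X d" using assms(1) unfolding CAT0_def by blast
  have g2: "geodesic_space X d'" using assms(5) unfolding CAT0_def by blast
  have m1: "Metric_space X d" using g1 unfolding geodesic_space_def by blast
  have m2: "Metric_space X d'" using g2 unfolding geodesic_space_def by blast
  have rx: "range xs \<subseteq> X" and ry: "range ys \<subseteq> X"
    using assms(9,10) unfolding r_sequence_def by auto
  have eq2: "\<forall>x\<in>X. \<forall>y\<in>X. d' x y \<le> 1 \<longleftrightarrow> d x y \<le> 1" using assms(8) by blast
  show ?thesis
    using transfer_pe[OF g1 m2 assms(8) rx ry] transfer_pe[OF g2 m1 eq2 rx ry] by blast
qed

end
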